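(* Let $G$ be a finite simple graph on $n$ vertices such that $\xi(G)=1$, i.e. $G$ has exactly one independent set of size $\alpha(G)$. Then $i_{\alpha(G)-1}\le 3^{\frac{n}{3}}+n-1$, where $i_{\alpha(G)-1}$ is the number of independent sets of size $\alpha(G)-1$ in $G$.
   Context: $\alpha(G)$ is the independence number of $G$ (maximum size of an independent set), $\xi(G)$ is the number of maximum independent sets of $G$, and $i_k$ denotes the number of independent sets of size $k$ in $G$. *)

theory Defs
  imports Main Complex_Main
begin

text \<open>A finite simple graph: finite vertex set V with a symmetric irreflexive
edge relation E (only its restriction to V matters).\<close>
definition simple_graph :: "'a set \<Rightarrow> ('a \<Rightarrow> 'a \<Rightarrow> bool) \<Rightarrow> bool" where
  "simple_graph V E \<longleftrightarrow> finite V \<and> (\<forall>u\<in>V. \<forall>v\<in>V. E u v \<longrightarrow> E v u) \<and> (\<forall>v\<in>V. \<not> E v v)"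

definition indep_set :: "'a set \<Rightarrow> ('a \<Rightarrow> 'a \<Rightarrow> bool) \<Rightarrow> 'a set \<Rightarrow> bool" where
  "indep_set V E S \<longleftrightarrow> S \<subseteq> V \<and> (\<forall>u\<in>S. \<forall>v\<in>S. \<not> E u v)"

definition indep_num :: "'a set \<Rightarrow> ('a \<Rightarrow> 'a \<Rightarrow> bool) \<Rightarrow> nat" where
  "indep_num V E = Max {card S | S. indep_set V E S}"

definition num_max_indep :: "'a set \<Rightarrow> ('a \<Rightarrow> 'a \<Rightarrow> bool) \<Rightarrow> nat" where
  "num_max_indep V E = card {S. indep_set V E S \<and> card S = indep_num V E}"

text \<open>i_k: number of independent sets of size k (k an integer; 0 for k < 0)\<close>
definition num_indep_k :: "'a set \<Rightarrow> ('a \<Rightarrow> 'a \<Rightarrow> bool) \<Rightarrow> int \<Rightarrow> nat" where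
  "num_indep_k V E k = card {S. indep_set V E S \<and> int (card S) = k}"

end

theory Submission
  imports Defs
begin

lemma cube_le: "(k::nat) ^ 3 \<le> 3 ^ k"
proof (induction k rule: less_induct)
  case (less k)
  show ?case
  proof (cases "k \<le> 3")
    case True
    then have "k = 0 \<or> k = 1 \<or> k = 2 \<or> k = 3" by auto
    then show ?thesis by auto
  next
    case False
    then obtain j where j: "k = Suc j" "j \<ge> 3" by (cases k) auto
    have ih: "j^3 \<le> 3^j" using less j by auto
    have "(Suc j)^3 \<le> 3 * j^3"
    proof -
      have "(Suc j)^3 = j^3 + 3*j^2 + 3*j + 1" by (simp add: power3_eq_cube power2_eq_square algebra_simps)
      also have "3*j^2 \<le> j^3" using j(2) by (simp add: power3_eq_cube power2_eq_square)
      moreover have "3*j + 1 \<le> j^3" using j(2)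
      proof -
        have "9 \<le> j*j" using mult_le_mono[OF j(2) j(2)] by simp
        have "9 * j \<le> j^3" using mult_le_mono1[OF \<open>9 \<le> j*j\<close>, of j]
          by (simp add: power3_eq_cube)
        then show ?thesis using j(2) by linarith
      qed
      ultimately show ?thesis by linarith
    qed
    then show ?thesis using ih j by simp
  qed
qed

lemma k_le_powr: "real k \<le> 3 powr (real k / 3)"
proof (rule ccontr)
  assume "\<not> ?thesis"
  hence lt: "3 powr (real k / 3) < real k" by simp
  have "(3 powr (real k / 3)) ^ 3 < (real k)^3"
    by (rule power_strict_mono[OF lt]) auto
  also have "(3 powr (real k / 3)) ^ 3 = 3 powr (real k)"
    by (simp add: powr_realpow[symmetric] powr_powr)
  also have "\<dots> = 3 ^ k" by (simp add: powr_realpow)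
  finally have "real (3^k) < real (k^3)" by simp
  then show False using cube_le[of k] by linarith
qed

definition maxind :: "'a set \<Rightarrow> ('a \<Rightarrow> 'a \<Rightarrow> bool) \<Rightarrow> 'a set \<Rightarrow> bool" where
  "maxind V E I \<longleftrightarrow> indep_set V E I \<and> (\<forall>x\<in>V - I. \<not> indep_set V E (insert x I))"

lemma maxind_sub: "{I. maxind V E I} \<subseteq> Pow V"
  by (auto simp: maxind_def indep_set_def)

lemma moon_moser:
  assumes "finite V" "\<forall>u\<in>V. \<forall>v\<in>V. E u v \<longrightarrow> E v u" "\<forall>v\<in>V. \<not> E v v"
  shows "real (card {I. maxind V E I}) \<le> 3 powr (real (card V) / 3)"
  using assms
proof (induction "card V" arbitrary: V rule: less_induct)
  case less
  note fin = less.prems(1) and sym = less.prems(2) and irr = less.prems(3)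
  show ?case
  proof (cases "V = {}")
    case True
    have "{I. maxind V E I} \<subseteq> {{}}" using maxind_sub[of V E] True by auto
    then have "card {I. maxind V E I} \<le> card {{}::'a set}" by (rule card_mono[rotated]) simp
    then have "card {I. maxind V E I} \<le> 1" by simp
    then show ?thesis using True by simp
  next
    case False
    define N where "N u = insert u {w\<in>V. E u w}" for u
    have finN: "finite (N u)" for u using fin by (simp add: N_def)
    have NV: "u \<in> V \<Longrightarrow> N u \<subseteq> V" for u by (auto simp: N_def)
    define m where "m = Min ((\<lambda>u. card (N u)) ` V)"
    have "m \<in> (\<lambda>u. card (N u)) ` V" unfolding m_def using fin False by (intro Min_in) auto
    then obtain v where v: "v \<in> V" "card (N v) = m" by auto
    have vmin: "u \<in> V \<Longrightarrow> card (N v) \<le> card (N u)" for u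
      unfolding v(2) m_def using fin by (intro Min_le) auto
    define n where "n = card V"
    define k where "k = card (N v)"
    have "N v \<noteq> {}" by (simp add: N_def)
    hence k1: "k \<ge> 1" using finN[of v] card_gt_0_iff[of "N v"] unfolding k_def by linarith
    have kn: "k \<le> n" unfolding k_def n_def using card_mono[OF fin NV[OF v(1)]] .
    have cover: "{I. maxind V E I} \<subseteq> (\<Union>u\<in>N v. {I. maxind V E I \<and> u \<in> I})"
    proof
      fix I assume "I \<in> {I. maxind V E I}"
      hence I: "maxind V E I" by simp
      show "I \<in> (\<Union>u\<in>N v. {I. maxind V E I \<and> u \<in> I})"
      proof (cases "v \<in> I")
        case True then show ?thesis using I by (auto simp: N_def)
      next
        case False
        hence "\<not> indep_set V E (insert v I)" using I v(1) by (auto simp: maxind_def)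
        moreover have "I \<subseteq> V" "\<forall>a\<in>I. \<forall>b\<in>I. \<not> E a b" using I by (auto simp: maxind_def indep_set_def)
        ultimately obtain a b where ab: "a \<in> insert v I" "b \<in> insert v I" "E a b"
          using v(1) unfolding indep_set_def by blast
        have "\<exists>w. w \<in> I \<and> (E v w \<or> E w v)"
        proof (cases "a = v")
          case True
          then show ?thesis using ab irr v(1) by blast
        next
          case False
          hence "a \<in> I" using ab by blast
          then show ?thesis using ab \<open>\<forall>a\<in>I. \<forall>b\<in>I. \<not> E a b\<close> by blast
        qed
        then obtain w where "w \<in> I" "E v w \<or> E w v" by blast
        hence "w \<in> I" "E v w" using sym v(1) \<open>I \<subseteq> V\<close> by blast+
        then show ?thesis using I \<open>I \<subseteq> V\<close> by (auto simp: N_def)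
      qed
    qed
    have each: "real (card {I. maxind V E I \<and> u \<in> I}) \<le> 3 powr (real (n - k) / 3)"
      if u: "u \<in> N v" for u
    proof -
      have uV: "u \<in> V" using u NV v(1) by auto
      let ?V' = "V - N u"
      have inj: "inj_on (\<lambda>I. I - {u}) {I. maxind V E I \<and> u \<in> I}"
        by (rule inj_onI) (metis (no_types, lifting) insert_Diff mem_Collect_eq)
      have img: "(\<lambda>I. I - {u}) ` {I. maxind V E I \<and> u \<in> I} \<subseteq> {J. maxind ?V' E J}"
      proof clarify
        fix I assume I: "maxind V E I" "u \<in> I"
        have IV: "I \<subseteq> V" and ind: "\<forall>a\<in>I. \<forall>b\<in>I. \<not> E a b"
          using I by (auto simp: maxind_def indep_set_def)
        have "I - {u} \<subseteq> ?V'" using IV ind I(2) by (auto simp: N_def)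
        moreover have "\<not> indep_set ?V' E (insert x (I - {u}))" if x: "x \<in> ?V' - (I - {u})" for x
        proof -
          have xV: "x \<in> V - I" using x by (auto simp: N_def)
          hence "\<not> indep_set V E (insert x I)" using I by (auto simp: maxind_def)
          then obtain a b where ab: "a \<in> insert x I" "b \<in> insert x I" "E a b"
            using IV xV by (auto simp: indep_set_def)
          have nux1: "\<not> E u x" using x uV xV by (simp add: N_def)
          have nux: "\<not> E u x" "\<not> E x u" using nux1 sym uV xV by blast+
          have "x \<noteq> u" using x by (auto simp: N_def)
          have "\<exists>a\<in>insert x (I - {u}). \<exists>b\<in>insert x (I - {u}). E a b"
          proof -
            have "a \<noteq> u" using ab ind nux \<open>x \<noteq> u\<close> by auto
            moreover have "b \<noteq> u" using ab ind nux \<open>x \<noteq> u\<close> by auto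
            ultimately show ?thesis using ab by blast
          qed
          then show ?thesis by (auto simp: indep_set_def)
        qed
        ultimately show "maxind ?V' E (I - {u})"
          using ind by (auto simp: maxind_def indep_set_def)
      qed
      have fin': "finite {J. maxind ?V' E J}"
        using maxind_sub[of ?V' E] fin by (meson finite_Diff finite_Pow_iff finite_subset)
      have c1: "card {I. maxind V E I \<and> u \<in> I} \<le> card {J. maxind ?V' E J}"
        by (rule card_inj_on_le[OF inj img fin'])
      have lt: "card ?V' < card V"
        using fin uV by (intro psubset_card_mono) (auto simp: N_def)
      have ih: "real (card {J. maxind ?V' E J}) \<le> 3 powr (real (card ?V') / 3)"
      proof (rule less.hyps[OF lt])
        show "finite ?V'" using fin by blast
        show "\<forall>u\<in>?V'. \<forall>v\<in>?V'. E u v \<longrightarrow> E v u" using sym by blast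
        show "\<forall>v\<in>?V'. \<not> E v v" using irr by blast
      qed
      have cV': "card ?V' = n - card (N u)"
        unfolding n_def using fin NV[OF uV] by (simp add: card_Diff_subset finN)
      have "card ?V' \<le> n - k" using cV' vmin[OF uV] unfolding k_def by simp
      hence "3 powr (real (card ?V') / 3) \<le> 3 powr (real (n - k) / 3)" by simp
      with ih c1 show ?thesis by linarith
    qed
    have fincs: "finite {I. maxind V E I}" using maxind_sub[of V E] fin by (meson finite_Pow_iff finite_subset)
    have "card {I. maxind V E I} \<le> card (\<Union>u\<in>N v. {I. maxind V E I \<and> u \<in> I})"
      by (rule card_mono[OF _ cover]) (use finN fincs in auto)
    also have "\<dots> \<le> (\<Sum>u\<in>N v. card {I. maxind V E I \<and> u \<in> I})"
      by (rule card_UN_le[OF finN])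
    finally have "real (card {I. maxind V E I}) \<le> (\<Sum>u\<in>N v. real (card {I. maxind V E I \<and> u \<in> I}))"
      by (metis of_nat_le_iff of_nat_sum)
    also have "\<dots> \<le> (\<Sum>u\<in>N v. 3 powr (real (n - k) / 3))"
      by (rule sum_mono) (rule each)
    also have "\<dots> = real k * 3 powr (real (n - k) / 3)" by (simp add: k_def)
    also have "\<dots> \<le> 3 powr (real k / 3) * 3 powr (real (n - k) / 3)"
      by (rule mult_right_mono[OF k_le_powr]) simp
    also have "\<dots> = 3 powr (real n / 3)"
      using kn by (simp add: powr_add[symmetric] of_nat_diff add_divide_distrib[symmetric])
    finally show ?thesis by (simp add: n_def)
  qed
qed

theorem lemma2:
  fixes V :: "'a set" and E :: "'a \<Rightarrow> 'a \<Rightarrow> bool"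
  assumes "simple_graph V E"
    and "num_max_indep V E = 1"
  shows "real (num_indep_k V E (int (indep_num V E) - 1))
           \<le> 3 powr (real (card V) / 3) + real (card V) - 1"
proof -
  have fin: "finite V" and sym: "\<forall>u\<in>V. \<forall>v\<in>V. E u v \<longrightarrow> E v u" and irr: "\<forall>v\<in>V. \<not> E v v"
    using assms(1) by (auto simp: simple_graph_def)
  define a where "a = indep_num V E"
  have finI: "finite {S. indep_set V E S}"
    by (rule finite_subset[of _ "Pow V"]) (auto simp: indep_set_def fin)
  have finC: "finite {card S | S. indep_set V E S}"
    using finI by (simp add: setcompr_eq_image)
  have le_a: "indep_set V E T \<Longrightarrow> card T \<le> a" for T
    unfolding a_def indep_num_def using finC by (intro Max_ge) auto
  have "card {S. indep_set V E S \<and> card S = a} = 1" using assms(2) by (simp add: num_max_indep_def a_def)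
  then obtain S where S: "{S. indep_set V E S \<and> card S = a} = {S}" by (meson card_1_singletonE)
  have Sind: "indep_set V E S" and cS: "card S = a" using S by auto
  have uniq: "indep_set V E T \<Longrightarrow> card T = a \<Longrightarrow> T = S" for T using S by auto
  have SV: "S \<subseteq> V" using Sind by (simp add: indep_set_def)
  have finS: "finite S" using SV fin finite_subset by blast
  have aV: "a \<le> card V" using cS card_mono[OF fin SV] by simp
  have Smax: "maxind V E S"
  proof -
    have "\<not> indep_set V E (insert x S)" if "x \<in> V - S" for x
    proof
      assume "indep_set V E (insert x S)"
      hence "card (insert x S) \<le> a" by (rule le_a)
      moreover have "card (insert x S) = a + 1" using that finS cS by simp
      ultimately show False by simp
    qed
    then show ?thesis using Sind by (auto simp: maxind_def)
  qed
  define T where "T = {T. indep_set V E T \<and> int (card T) = int a - 1}"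
  show ?thesis
  proof (cases "a = 0")
    case True
    hence "T = {}" by (auto simp: T_def)
    have "num_indep_k V E (int (indep_num V E) - 1) = card T" by (simp add: num_indep_k_def T_def a_def)
    hence "num_indep_k V E (int (indep_num V E) - 1) = 0" using \<open>T = {}\<close> by simp
    moreover have "3 powr (real (card V) / 3) \<ge> 1" by (rule ge_one_powr_ge_zero) auto
    ultimately show ?thesis by simp
  next
    case False
    have sub: "T \<subseteq> {U. U \<subseteq> S \<and> card U = a - 1} \<union> ({I. maxind V E I} - {S})"
    proof
      fix U assume "U \<in> T"
      hence U: "indep_set V E U" "card U = a - 1" using False by (auto simp: T_def)
      show "U \<in> {U. U \<subseteq> S \<and> card U = a - 1} \<union> ({I. maxind V E I} - {S})"
      proof (cases "maxind V E U")
        case True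
        have "U \<noteq> S" using U(2) cS False by auto
        then show ?thesis using True by auto
      next
        case nm: False
        then obtain x where x: "x \<in> V - U" "indep_set V E (insert x U)" using U(1) by (auto simp: maxind_def)
        have finU: "finite U" using U(1) fin finite_subset unfolding indep_set_def by blast
        have "card (insert x U) = a" using x finU U(2) False by simp
        hence "insert x U = S" using uniq x(2) by simp
        then show ?thesis using U(2) by auto
      qed
    qed
    have finM: "finite {I. maxind V E I}" using maxind_sub[of V E] fin by (meson finite_Pow_iff finite_subset)
    have "card T \<le> card ({U. U \<subseteq> S \<and> card U = a - 1} \<union> ({I. maxind V E I} - {S}))"
    proof (rule card_mono[OF _ sub])
      have "{U. U \<subseteq> S \<and> card U = a - 1} \<subseteq> Pow S" by blast
      hence "finite {U. U \<subseteq> S \<and> card U = a - 1}" using finS finite_subset by blast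
      then show "finite ({U. U \<subseteq> S \<and> card U = a - 1} \<union> ({I. maxind V E I} - {S}))"
        using finM by blast
    qed
    also have "\<dots> \<le> card {U. U \<subseteq> S \<and> card U = a - 1} + card ({I. maxind V E I} - {S})"
      by (rule card_Un_le)
    also have "card {U. U \<subseteq> S \<and> card U = a - 1} = a choose (a - 1)"
      using n_subsets[OF finS] cS by simp
    also have "a choose (a - 1) = a" proof -
      have "a choose (a - 1) = a choose (a - (a - 1))" by (rule binomial_symmetric) simp
      also have "a - (a - 1) = 1" using False by simp
      finally show ?thesis by simp
    qed
    also have "card ({I. maxind V E I} - {S}) = card {I. maxind V E I} - 1"
      using Smax finM by simp
    finally have cT: "card T \<le> a + (card {I. maxind V E I} - 1)" .
    have "card {I. maxind V E I} \<ge> 1" using Smax finM card_gt_0_iff[of "{I. maxind V E I}"] by auto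
    hence "real (card T) \<le> real a + real (card {I. maxind V E I}) - 1"
      using cT by linarith
    also have "\<dots> \<le> real (card V) + 3 powr (real (card V) / 3) - 1"
      using moon_moser[OF fin sym irr] aV by simp
    finally show ?thesis by (simp add: num_indep_k_def T_def a_def)
  qed
qed

end
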